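(* Let $w\in\mathcal T$ be a word of length $\ell$ and let $p_x,p_y$ be Gaussian integers with $\max\{\|p_x\|,\|p_y\|\}>\ell$. Then $I_{p_x,p_y}(w)$ is trivial.
   Context: For a Gaussian integer $p$, $\|p\|=\max\{|\mathrm{Re}\,p|,|\mathrm{Im}\,p|\}$. Let $F_2^{(a)},F_2^{(b)},F_2^{(c)}$ be free groups on $a_1,a_2$; $b_1,b_2$; $c_1,c_2$, let $\psi\colon F_2^{(a)}\times F_2^{(b)}\times F_2^{(c)}\to\mathbb Z^2$ send $a_i,b_i,c_i\mapsto e_i$, and $K=\ker\psi$, generated by $x_i=a_ic_i^{-1}$, $y_i=b_ic_i^{-1}$. $\mathcal T\subseteq F(x_1,x_2,y_1,y_2)$ is the set of elements representing the identity of $K$. $\mathrm{Conf}_2(X)=\{(z_1,z_2)\in X^2:z_1\ne z_2\}$. For Gaussian integers $p_x,p_y$ put $\hat p_x=p_x-(\tfrac13+\tfrac13 i)$, $\hat p_y=p_y+(\tfrac13+\tfrac13i)$. For $w\in\mathcal T$ given by a word of length $\ell$, define $\gamma_x,\gamma_y\colon[0,1]\to\mathbb C$ with $\gamma_x(0)=\hat p_x$, $\gamma_y(0)=\hat p_y$, linear on each $[(k-1)/\ell,k/\ell]$: if the $k$-th letter is $x_1^\delta$ (resp. $x_2^\delta$), $\delta=\pm1$, $\gamma_x$ moves by $\delta$ (resp. $i\delta$) and $\gamma_y$ is constant; if it is $y_1^\delta$ (resp. $y_2^\delta$), $\gamma_y$ moves by $-\delta$ (resp. $-i\delta$) and $\gamma_x$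 is constant. $(\gamma_x,\gamma_y)$ is a loop in $\mathrm{Conf}_2(\mathbb C\setminus\{0\})$ based at $(\hat p_x,\hat p_y)$, and $I_{p_x,p_y}(w)$ is its class in $\pi_1(\mathrm{Conf}_2(\mathbb C\setminus\{0\}),(\hat p_x,\hat p_y))$ (independent of the word chosen for $w$). *)

theory Defs
  imports "HOL-Analysis.Analysis"
begin

text \<open>A letter is a generator together
with an exponent sign: True means exponent +1, False means exponent -1.
A word is a list of letters (not necessarily freely reduced).\<close>

datatype gen = X1 | X2 | Y1 | Y2

type_synonym letter = "gen \<times> bool"

definition cancel1 :: "('a \<times> bool) list \<Rightarrow> ('a \<times> bool) list \<Rightarrow> bool" where
  "cancel1 u v \<longleftrightarrow> (\<exists>a b g e. u = a @ [(g, e), (g, \<not> e)] @ b \<and> v = a @ b)"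

definition free_trivial :: "('a \<times> bool) list \<Rightarrow> bool" where
  "free_trivial w \<longleftrightarrow> cancel1\<^sup>*\<^sup>* w []"

text \<open>Images of a word under the inclusion K \<subseteq> F2^(a) x F2^(b) x F2^(c),
x_i = a_i c_i^{-1}, y_i = b_i c_i^{-1}. Generators a_i, b_i, c_i are encoded by the index i.\<close>
fun gen_idx :: "gen \<Rightarrow> nat" where
  "gen_idx X1 = 1" | "gen_idx X2 = 2" | "gen_idx Y1 = 1" | "gen_idx Y2 = 2"

fun is_x :: "gen \<Rightarrow> bool" where
  "is_x X1 = True" | "is_x X2 = True" | "is_x Y1 = False" | "is_x Y2 = False"

definition proj_a :: "letter list \<Rightarrow> (nat \<times> bool) list" where
  "proj_a w = map (\<lambda>(g, e). (gen_idx g, e)) (filter (\<lambda>(g, e). is_x g) w)"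

definition proj_b :: "letter list \<Rightarrow> (nat \<times> bool) list" where
  "proj_b w = map (\<lambda>(g, e). (gen_idx g, e)) (filter (\<lambda>(g, e). \<not> is_x g) w)"

definition proj_c :: "letter list \<Rightarrow> (nat \<times> bool) list" where
  "proj_c w = map (\<lambda>(g, e). (gen_idx g, \<not> e)) w"

text \<open>The set T: words representing the identity of K (equivalently, of the direct product).\<close>
definition in_T :: "letter list \<Rightarrow> bool" where
  "in_T w \<longleftrightarrow> free_trivial (proj_a w) \<and> free_trivial (proj_b w) \<and> free_trivial (proj_c w)"

definition gaussian_int :: "complex \<Rightarrow> bool" where
  "gaussian_int p \<longleftrightarrow> Re p \<in> \<int> \<and> Im p \<in> \<int>"

definition gnorm :: "complex \<Rightarrow> real" where
  "gnorm p = max \<bar>Re p\<bar> \<bar>Im p\<bar>"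

definition sgn_b :: "bool \<Rightarrow> complex" where
  "sgn_b e = (if e then 1 else -1)"

fun step_x :: "letter \<Rightarrow> complex" where
  "step_x (X1, e) = sgn_b e"
| "step_x (X2, e) = \<i> * sgn_b e"
| "step_x (Y1, e) = 0"
| "step_x (Y2, e) = 0"

fun step_y :: "letter \<Rightarrow> complex" where
  "step_y (Y1, e) = - sgn_b e"
| "step_y (Y2, e) = - \<i> * sgn_b e"
| "step_y (X1, e) = 0"
| "step_y (X2, e) = 0"

definition vertex :: "(letter \<Rightarrow> complex) \<Rightarrow> complex \<Rightarrow> letter list \<Rightarrow> nat \<Rightarrow> complex" where
  "vertex st z w k = z + sum_list (map st (take k w))"

definition pl_path :: "(letter \<Rightarrow> complex) \<Rightarrow> complex \<Rightarrow> letter list \<Rightarrow> real \<Rightarrow> complex" where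
  "pl_path st z w t =
     (let l = length w; s = t * real l; k = min (nat \<lfloor>s\<rfloor>) (l - 1) in
      vertex st z w k + of_real (s - real k) * (vertex st z w (Suc k) - vertex st z w k))"

definition hat_x :: "complex \<Rightarrow> complex" where
  "hat_x p = p - (1/3 + \<i>/3)"

definition hat_y :: "complex \<Rightarrow> complex" where
  "hat_y p = p + (1/3 + \<i>/3)"

definition gamma :: "complex \<Rightarrow> complex \<Rightarrow> letter list \<Rightarrow> real \<Rightarrow> complex \<times> complex" where
  "gamma px py w t = (pl_path step_x (hat_x px) w t, pl_path step_y (hat_y py) w t)"

definition Conf2_punct :: "(complex \<times> complex) set" where
  "Conf2_punct = {(z1, z2). z1 \<noteq> 0 \<and> z2 \<noteq> 0 \<and> z1 \<noteq> z2}"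

definition I_trivial :: "complex \<Rightarrow> complex \<Rightarrow> letter list \<Rightarrow> bool" where
  "I_trivial px py w \<longleftrightarrow>
     homotopic_loops Conf2_punct (gamma px py w) (linepath (hat_x px, hat_y py) (hat_x px, hat_y py))"

end

theory Submission
  imports Defs
begin


definition clamp :: "real \<Rightarrow> real" where "clamp x = max 0 (min 1 x)"

fun W :: "complex list \<Rightarrow> real \<Rightarrow> complex" where
  "W [] x = 0"
| "W (v # vs) x = of_real (clamp x) * v + W vs (x - 1)"

definition walk :: "complex \<Rightarrow> complex list \<Rightarrow> real \<Rightarrow> complex" where
  "walk z vs t = z + W vs (t * real (length vs))"

lemma W_le0: "x \<le> 0 \<Longrightarrow> W vs x = 0"
  by (induction vs arbitrary: x) (auto simp: clamp_def)

lemma W_ge: "x \<ge> real (length vs) \<Longrightarrow> W vs x = sum_list vs"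
  by (induction vs arbitrary: x) (auto simp: clamp_def)

lemma W_append: "W (A @ B) x = W A x + W B (x - real (length A))"
  by (induction A arbitrary: x) (auto simp: algebra_simps)

lemma cont_clamp: "continuous_on UNIV clamp"
  unfolding clamp_def by (intro continuous_intros)

lemma cont_W: "continuous_on UNIV (W vs)"
proof (induction vs)
  case Nil then show ?case by simp
next
  case (Cons v vs)
  have "continuous_on UNIV (\<lambda>x. W vs (x - 1))"
    using Cons by (intro continuous_on_compose2[OF Cons]) (auto intro: continuous_intros)
  moreover have "continuous_on UNIV (\<lambda>x. of_real (clamp x) * v)"
    by (intro continuous_intros continuous_on_compose2[OF cont_clamp]) auto
  ultimately show ?case by (simp add: continuous_on_add)
qed

lemma cont_W_comp: "continuous_on S f \<Longrightarrow> continuous_on S (\<lambda>x. W vs (f x))"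
  by (rule continuous_on_compose2[OF cont_W]) auto

lemma path_walk: "path (walk z vs)"
  unfolding path_def walk_def by (intro continuous_intros cont_W_comp)

lemma walk_0: "walk z vs 0 = z"
  by (simp add: walk_def W_le0)

lemma walk_1: "walk z vs 1 = z + sum_list vs"
  by (simp add: walk_def W_ge)


lemma path_image_walk: "path_image (walk z vs) = (\<lambda>t. walk z vs t) ` {0..1}"
  by (simp add: path_image_def)

lemma walk_Nil[simp]: "walk z [] t = z"
  by (simp add: walk_def)

lemma zero_remove:
  assumes vs: "vs = A @ [0] @ B"
  shows "path_image (walk z (A@B)) \<subseteq> path_image (walk z vs) \<and>
         homotopic_paths (path_image (walk z vs)) (walk z vs) (walk z (A@B))"
proof (cases "A @ B = []")
  case True
  then have vs1: "vs = [0]" using vs by simp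
  have "walk z vs = (\<lambda>t. z)" by (rule ext) (simp add: vs1 walk_def)
  moreover have "walk z (A@B) = (\<lambda>t. z)" using True by (simp add: walk_def fun_eq_iff)
  ultimately show ?thesis
    by (simp add: homotopic_paths_refl path_image_walk path_def)
next
  case False
  define j where "j = real (length A)"
  define n where "n = real (length vs)"
  have n1: "n - 1 = real (length (A @ B))" using vs by (simp add: n_def)
  have npos: "n - 1 > 0" using False n1 by (cases A; cases B; simp)
  define \<psi> where "\<psi> x = min x j + max 0 (x - (j+1))" for x :: real
  define \<phi> where "\<phi> t = \<psi> (t * n) / (n - 1)" for t
  have keyW: "W vs x = W (A@B) (\<psi> x)" for x
  proof -
    have "W vs x = W A x + W B (x - j - 1)"
      by (simp add: vs W_append j_def clamp_def algebra_simps)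
    moreover have "W (A@B) (\<psi> x) = W A (\<psi> x) + W B (\<psi> x - j)"
      by (simp add: W_append j_def)
    moreover have "W A (\<psi> x) = W A x"
    proof (cases "x \<le> j")
      case True then show ?thesis by (simp add: \<psi>_def)
    next
      case False
      then have "\<psi> x \<ge> j" by (simp add: \<psi>_def)
      then show ?thesis using False by (simp add: W_ge j_def)
    qed
    moreover have "W B (\<psi> x - j) = W B (x - j - 1)"
    proof (cases "x \<le> j + 1")
      case True
      then have "\<psi> x - j \<le> 0" by (simp add: \<psi>_def)
      then show ?thesis using True by (simp add: W_le0)
    next
      case False then show ?thesis by (simp add: \<psi>_def algebra_simps)
    qed
    ultimately show ?thesis by simp
  qed
  have q: "walk z vs t = walk z (A@B) (\<phi> t)" for t
    using keyW npos n1 by (simp add: walk_def \<phi>_def n_def)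
  have contphi: "continuous_on {0..1} \<phi>"
    unfolding \<phi>_def \<psi>_def by (intro continuous_intros) (use npos in auto)
  have jn: "0 \<le> j" "j + 1 \<le> n" using vs by (auto simp: j_def n_def)
  have phi01: "\<phi> \<in> {0..1} \<rightarrow> {0..1}"
  proof
    fix t :: real assume t: "t \<in> {0..1}"
    then have "0 \<le> t * n" "t * n \<le> n" using jn by (auto intro: mult_left_le_one_le)
    moreover have "0 \<le> \<psi> x \<and> \<psi> x \<le> n - 1" if "0 \<le> x" "x \<le> n" for x
      using that jn unfolding \<psi>_def by (auto simp: min_def max_def)
    ultimately have "0 \<le> \<psi> (t*n)" "\<psi> (t * n) \<le> n - 1" by blast+
    then show "\<phi> t \<in> {0..1}" using npos by (simp add: \<phi>_def)
  qed
  have phi0: "\<phi> 0 = 0" using jn by (simp add: \<phi>_def \<psi>_def)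
  have phi1: "\<phi> 1 = 1" using jn npos by (simp add: \<phi>_def \<psi>_def)
  have img: "path_image (walk z (A@B)) \<subseteq> path_image (walk z vs)"
  proof
    fix p assume "p \<in> path_image (walk z (A@B))"
    then obtain \<tau> where tau: "\<tau> \<in> {0..1}" "p = walk z (A@B) \<tau>" by (auto simp: path_image_walk)
    define y where "y = \<tau> * (n - 1)"
    have y: "0 \<le> y" "y \<le> n - 1" using tau npos by (auto simp: y_def intro: mult_left_le_one_le)
    define t where "t = (if y \<le> j then y / n else (y + 1) / n)"
    have t01: "t \<in> {0..1}" using y jn npos by (auto simp: t_def divide_simps)
    have "\<psi> (t * n) = y" using y jn npos by (auto simp: t_def \<psi>_def)
    then have "\<phi> t = \<tau>" using npos by (simp add: \<phi>_def y_def)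
    then have "p = walk z vs t" using q tau by simp
    then show "p \<in> path_image (walk z vs)" using t01 by (auto simp: path_image_walk)
  qed
  have "homotopic_paths (path_image (walk z vs)) (walk z (A@B)) (walk z vs)"
    by (rule homotopic_paths_reparametrize[OF path_walk img contphi phi01 phi0 phi1 q])
  then show ?thesis using img homotopic_paths_sym by blast
qed


lemma clamp_simps: "x \<le> 0 \<Longrightarrow> clamp x = 0" "x \<ge> 1 \<Longrightarrow> clamp x = 1"
  "0 \<le> x \<Longrightarrow> x \<le> 1 \<Longrightarrow> clamp x = x" "0 \<le> clamp x" "clamp x \<le> 1"
  by (auto simp: clamp_def)

lemma spike_remove:
  assumes vs: "vs = A @ [c, -c] @ B"
  shows "homotopic_paths (path_image (walk z vs)) (walk z vs) (walk z (A @ [0,0] @ B))"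
proof -
  define j where "j = real (length A)"
  define n where "n = real (length vs)"
  have lens: "length (A @ [0,0] @ B) = length vs" using vs by simp
  have jn: "0 \<le> j" "j + 2 \<le> n" using vs by (auto simp: j_def n_def)
  define g where "g x = of_real (clamp (x - j) - clamp (x - j - 1)) * c" for x
  have Wvs: "W vs x = W A x + g x + W B (x - j - 2)" for x
    by (simp add: vs W_append j_def g_def algebra_simps)
  have Wvs': "W (A @ [0,0] @ B) x = W A x + W B (x - j - 2)" for x
    by (simp add: W_append j_def algebra_simps)
  define H where "H p = z + W A (snd p * n) + of_real (1 - fst p) * g (snd p * n) + W B (snd p * n - j - 2)" for p :: "real \<times> real"
  have contg: "continuous_on S (\<lambda>p. g (f p))" if "continuous_on S f" for S and f :: "'x::topological_space \<Rightarrow> real"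
    unfolding g_def
    by (intro continuous_intros continuous_on_compose2[OF cont_clamp] that) auto
  have contH: "continuous_on ({0..1} \<times> {0..1}) H"
    unfolding H_def by (intro continuous_intros cont_W_comp contg)
  have H0: "H (0, t) = walk z vs t" for t
    by (simp add: H_def walk_def Wvs n_def)
  have H1: "H (1, t) = walk z (A @ [0,0] @ B) t" for t
    using lens by (simp add: H_def walk_def Wvs'[symmetric] n_def)
  have gsmall: "g x = 0" if "x \<le> j \<or> x \<ge> j + 2" for x
    using that by (auto simp: g_def clamp_simps)
  have Hs: "H (s, 0) = z" "H (s, 1) = walk z vs 1" for s
    using jn by (auto simp: H_def walk_def Wvs W_le0 gsmall n_def)
  have Himg: "H (s, t) \<in> path_image (walk z vs)" if st: "s \<in> {0..1}" "t \<in> {0..1}" for s t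
  proof -
    define x where "x = t * n"
    have x: "0 \<le> x" "x \<le> n" using st jn by (auto simp: x_def intro: mult_left_le_one_le)
    show ?thesis
    proof (cases "x \<le> j \<or> x \<ge> j + 2")
      case True
      then have "H (s, t) = walk z vs t" by (simp add: H_def walk_def Wvs gsmall x_def n_def)
      then show ?thesis using st by (auto simp: path_image_walk)
    next
      case False
      then have xj: "j < x" "x < j + 2" by auto
      define lm where "lm = (1 - s) * (clamp (x - j) - clamp (x - j - 1))"
      have lam: "0 \<le> lm" "lm \<le> 1"
      proof -
        have a: "0 \<le> clamp (x - j) - clamp (x - j - 1)" "clamp (x - j) - clamp (x - j - 1) \<le> 1"
          using xj by (auto simp: clamp_def)
        show "0 \<le> lm" using a st by (simp add: lm_def)
        show "lm \<le> 1" using a st by (simp add: lm_def mult_le_one)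
      qed
      define t' where "t' = (j + lm) / n"
      have npos: "n > 0" using jn by simp
      have t'01: "t' \<in> {0..1}" using lam jn npos by (auto simp: t'_def divide_simps)
      have t'n: "t' * n = j + lm" using npos by (simp add: t'_def)
      have "walk z vs t' = z + W A (j + lm) + g (j + lm) + W B (j + lm - j - 2)"
        by (simp add: walk_def Wvs t'n flip: n_def)
      also have "\<dots> = z + sum_list A + of_real lm * c"
        using lam by (simp add: W_ge W_le0 j_def g_def clamp_simps)
      also have "\<dots> = H (s, t)"
        using xj by (simp add: H_def W_ge W_le0 j_def g_def lm_def flip: x_def)
      finally show ?thesis using t'01 unfolding path_image_walk by (metis image_eqI)
    qed
  qed
  show ?thesis
    unfolding homotopic_paths
    apply (rule exI[of _ H])
    using contH H0 H1 Hs Himg by (auto simp: pathstart_def pathfinish_def walk_0)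
qed


definition Rstep :: "complex list \<Rightarrow> complex list \<Rightarrow> bool" where
  "Rstep u v \<longleftrightarrow> (\<exists>A B. u = A @ [0] @ B \<and> v = A @ B) \<or>
                 (\<exists>A B c. u = A @ [c, -c] @ B \<and> v = A @ [0,0] @ B)"

lemma Rstep_sum: "Rstep u v \<Longrightarrow> sum_list u = sum_list v"
  by (auto simp: Rstep_def)

lemma Rstar_sum: "Rstep\<^sup>*\<^sup>* u v \<Longrightarrow> sum_list u = sum_list v"
  by (induction rule: rtranclp_induct) (auto dest: Rstep_sum)

lemma Rstep_homot:
  assumes "Rstep vs vs'"
  shows "path_image (walk z vs') \<subseteq> path_image (walk z vs) \<and>
         homotopic_paths (path_image (walk z vs)) (walk z vs) (walk z vs')"
  using assms unfolding Rstep_def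
proof (elim disjE exE conjE)
  fix A B assume "vs = A @ [0] @ B" "vs' = A @ B"
  then show ?thesis using zero_remove by blast
next
  fix A B c assume "vs = A @ [c, -c] @ B" "vs' = A @ [0,0] @ B"
  then show ?thesis using spike_remove homotopic_paths_imp_subset by blast
qed

lemma tool:
  assumes "Rstep\<^sup>*\<^sup>* vs []"
  shows "homotopic_loops (path_image (walk z vs)) (walk z vs) (\<lambda>_. z)"
  using assms
proof (induction rule: converse_rtranclp_induct)
  case base
  have "walk z [] = (\<lambda>_. z)" by (simp add: fun_eq_iff)
  then show ?case
    by (simp add: homotopic_loops_refl path_def path_image_walk pathstart_def pathfinish_def)
next
  case (step vs vs')
  have s0: "sum_list vs = 0" "sum_list vs' = 0"
    using Rstar_sum[OF step(2)] Rstep_sum[OF step(1)] by auto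
  have h: "path_image (walk z vs') \<subseteq> path_image (walk z vs)"
       "homotopic_paths (path_image (walk z vs)) (walk z vs) (walk z vs')"
    using Rstep_homot[OF step(1)] by auto
  have "homotopic_loops (path_image (walk z vs)) (walk z vs) (walk z vs')"
    by (rule homotopic_paths_imp_homotopic_loops[OF h(2)])
       (simp_all add: pathstart_def pathfinish_def walk_0 walk_1 s0)
  moreover have "homotopic_loops (path_image (walk z vs)) (walk z vs') (\<lambda>_. z)"
    using homotopic_loops_subset[OF step(3) h(1)] .
  ultimately show ?case by (rule homotopic_loops_trans)
qed


lemma gnorm_tri: "gnorm (x + y) \<le> gnorm x + gnorm y"
  unfolding gnorm_def by (simp add: abs_if max_def) 

lemma gnorm_diff_tri: "gnorm (x - y) \<le> gnorm x + gnorm y"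
  unfolding gnorm_def by (simp add: abs_if max_def) 

lemma gnorm_minus: "gnorm (- x) = gnorm x" "gnorm (x - y) = gnorm (y - x)"
  unfolding gnorm_def by (simp_all add: abs_minus_commute)

lemma gnorm_scale: "gnorm (of_real r * x) = \<bar>r\<bar> * gnorm x"
  unfolding gnorm_def by (simp add: abs_mult max_mult_distrib_left)

lemma gnorm_nonneg: "0 \<le> gnorm x"
  unfolding gnorm_def by simp

lemma gnorm_conv:
  assumes "0 \<le> u" "u \<le> 1"
  shows "gnorm (of_real (1 - u) * x + of_real u * y - c) \<le> (1 - u) * gnorm (x - c) + u * gnorm (y - c)"
proof -
  have "of_real (1 - u) * x + of_real u * y - c = of_real (1 - u) * (x - c) + of_real u * (y - c)"
    by (simp add: algebra_simps)
  also have "gnorm \<dots> \<le> gnorm (of_real (1 - u) * (x - c)) + gnorm (of_real u * (y - c))"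
    by (rule gnorm_tri)
  also have "\<dots> = (1 - u) * gnorm (x - c) + u * gnorm (y - c)"
    using assms gnorm_scale[of "1 - u" "x - c"] gnorm_scale[of u "y - c"] by simp
  finally show ?thesis .
qed


lemma seg_pair:
  assumes "p \<in> closed_segment (x1, y1) (x2, y2)"
  obtains u where "0 \<le> u" "u \<le> 1"
    "p = (of_real (1 - u) * x1 + of_real u * x2, of_real (1 - u) * y1 + of_real u * (y2::complex))"
  using assms unfolding closed_segment_def by (auto simp: scaleR_conv_of_real)

lemma abs_main:
  fixes a b :: "real \<Rightarrow> complex" and ca cb :: complex and ra rb :: real
  assumes pa: "path a" and pb: "path b" and la: "a 1 = a 0" and lb: "b 1 = b 0"
    and ba: "\<And>t. t \<in> {0..1} \<Longrightarrow> gnorm (a t - ca) \<le> ra"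
    and bb: "\<And>t. t \<in> {0..1} \<Longrightarrow> gnorm (b t - cb) \<le> rb"
    and far: "gnorm ca > ra + 2 * rb" and rb0: "rb \<ge> 0"
    and b0: "\<And>t. t \<in> {0..1} \<Longrightarrow> b t \<noteq> 0"
    and ab: "\<And>t. t \<in> {0..1} \<Longrightarrow> a t \<noteq> b t"
    and Hb: "homotopic_loops (path_image b) b (\<lambda>_. b 0)"
    and Hd: "homotopic_loops (path_image (\<lambda>t. a t - b t)) (\<lambda>t. a t - b t) (\<lambda>_. a 0 - b 0)"
  shows "homotopic_loops Conf2_punct (\<lambda>t. (a t, b t)) (\<lambda>_. (a 0, b 0))"
proof -
  have nz: "z \<noteq> 0" if "gnorm (z - ca) \<le> r" "r < gnorm ca" for z r
  proof
    assume "z = 0" then show False using that by (simp add: gnorm_minus)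
  qed
  have ca0: "gnorm (a 0 - ca) \<le> ra" "gnorm (b 0 - cb) \<le> rb" using ba bb by auto
  have pab: "path (\<lambda>t. (a t, b t))"
    using pa pb unfolding path_def by (intro continuous_on_Pair)
  show ?thesis
  proof (cases "gnorm (ca - cb) > ra + rb")
    case True
    have sep: "z1 \<noteq> z2" if "gnorm (z1 - ca) \<le> ra" "gnorm (z2 - cb) \<le> rb" for z1 z2
    proof
      assume "z1 = z2"
      then have "gnorm (ca - cb) \<le> gnorm (z1 - ca) + gnorm (z2 - cb)"
        using gnorm_diff_tri[of "z1 - cb" "z1 - ca"] gnorm_minus by (simp add: algebra_simps)
      then show False using that True by simp
    qed
    have h1: "homotopic_loops Conf2_punct (\<lambda>t. (a t, b t)) (\<lambda>t. (a 0, b t))"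
    proof (rule homotopic_loops_linear)
      show "path (\<lambda>t. (a 0, b t))" using pb unfolding path_def by (intro continuous_intros)
      show "pathfinish (\<lambda>t. (a t, b t)) = pathstart (\<lambda>t. (a t, b t))"
        using la lb by (simp add: pathstart_def pathfinish_def)
      show "pathfinish (\<lambda>t. (a 0, b t)) = pathstart (\<lambda>t. (a 0, b t))"
        using lb by (simp add: pathstart_def pathfinish_def)
      show "closed_segment (a t, b t) (a 0, b t) \<subseteq> Conf2_punct" if t: "t \<in> {0..1}" for t
      proof
        fix p assume "p \<in> closed_segment (a t, b t) (a 0, b t)"
        then obtain u where u: "0 \<le> u" "u \<le> 1"
          and p: "p = (of_real (1 - u) * a t + of_real u * a 0, of_real (1 - u) * b t + of_real u * b t)"
          by (rule seg_pair)
        define q where "q = of_real (1 - u) * a t + of_real u * a 0"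
        have "gnorm (q - ca) \<le> (1 - u) * gnorm (a t - ca) + u * gnorm (a 0 - ca)"
          unfolding q_def by (rule gnorm_conv[OF u])
        also have "\<dots> \<le> (1 - u) * ra + u * ra"
          using u ba[OF t] ca0 by (intro add_mono mult_left_mono) auto
        finally have q: "gnorm (q - ca) \<le> ra" by (simp add: algebra_simps)
        have "of_real (1 - u) * b t + of_real u * b t = b t" by (simp add: algebra_simps)
        then have "p = (q, b t)" using p q_def by simp
        moreover have "q \<noteq> 0" using nz[OF q] far rb0 by linarith
        moreover have "q \<noteq> b t" using sep[OF q bb[OF t]] .
        ultimately show "p \<in> Conf2_punct" using b0[OF t] by (simp add: Conf2_punct_def)
      qed
    qed (use pab in auto)
    have h2: "homotopic_loops Conf2_punct ((\<lambda>z. (a 0, z)) \<circ> b) ((\<lambda>z. (a 0, z)) \<circ> (\<lambda>_. b 0))"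
    proof (rule homotopic_loops_continuous_image[OF Hb])
      show "continuous_on (path_image b) (\<lambda>z. (a 0, z))" by (intro continuous_intros)
      show "(\<lambda>z. (a 0, z)) \<in> path_image b \<rightarrow> Conf2_punct"
      proof
        fix z assume "z \<in> path_image b"
        then obtain t where t: "t \<in> {0..1}" "z = b t" by (auto simp: path_image_def)
        have "a 0 \<noteq> 0" using nz[OF ca0(1)] far rb0 by linarith
        then show "(a 0, z) \<in> Conf2_punct"
          using t b0[OF t(1)] sep[OF ca0(1) bb[OF t(1)]] by (simp add: Conf2_punct_def)
      qed
    qed
    have h2': "homotopic_loops Conf2_punct (\<lambda>t. (a 0, b t)) (\<lambda>_. (a 0, b 0))"
      using h2 by (simp add: o_def)
    from homotopic_loops_trans[OF h1 h2'] show ?thesis .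
  next
    case False
    then have cab: "gnorm (ca - cb) \<le> ra + rb" by simp
    define K where "K = ra + 2 * rb"
    have inK: "z \<noteq> 0" if "gnorm (z - ca) \<le> K" for z using nz[OF that] far K_def by simp
    have bK: "gnorm (b t - ca) \<le> K" if "t \<in> {0..1}" for t
      using gnorm_tri[of "b t - cb" "cb - ca"] bb[OF that] cab gnorm_minus(2)[of ca cb]
      by (simp add: K_def algebra_simps)
    have dK: "gnorm (b 0 + (a t - b t) - ca) \<le> K" if "t \<in> {0..1}" for t
    proof -
      have "b 0 + (a t - b t) - ca = (a t - ca) + ((b 0 - cb) - (b t - cb))" by (simp add: algebra_simps)
      then have "gnorm (b 0 + (a t - b t) - ca) \<le> gnorm (a t - ca) + (gnorm (b 0 - cb) + gnorm (b t - cb))"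
        using gnorm_tri[of "a t - ca" "(b 0 - cb) - (b t - cb)"] gnorm_diff_tri[of "b 0 - cb" "b t - cb"]
        by (simp only:)
      then show ?thesis using ba[OF that] bb[OF that] ca0 by (simp add: K_def)
    qed
    have aK: "gnorm (a t - ca) \<le> K" if "t \<in> {0..1}" for t
      using ba[OF that] rb0 by (simp add: K_def)
    have h1: "homotopic_loops Conf2_punct (\<lambda>t. (a t, b t)) (\<lambda>t. (b 0 + (a t - b t), b 0))"
    proof (rule homotopic_loops_linear)
      show "path (\<lambda>t. (b 0 + (a t - b t), b 0))" using pa pb unfolding path_def by (intro continuous_intros)
      show "pathfinish (\<lambda>t. (a t, b t)) = pathstart (\<lambda>t. (a t, b t))"
        using la lb by (simp add: pathstart_def pathfinish_def)
      show "pathfinish (\<lambda>t. (b 0 + (a t - b t), b 0)) = pathstart (\<lambda>t. (b 0 + (a t - b t), b 0))"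
        using la lb by (simp add: pathstart_def pathfinish_def)
      show "closed_segment (a t, b t) (b 0 + (a t - b t), b 0) \<subseteq> Conf2_punct" if t: "t \<in> {0..1}" for t
      proof
        fix p assume "p \<in> closed_segment (a t, b t) (b 0 + (a t - b t), b 0)"
        then obtain u where u: "0 \<le> u" "u \<le> 1"
          and p: "p = (of_real (1 - u) * a t + of_real u * (b 0 + (a t - b t)), of_real (1 - u) * b t + of_real u * b 0)"
          by (rule seg_pair)
        define q1 where "q1 = of_real (1 - u) * a t + of_real u * (b 0 + (a t - b t))"
        define q2 where "q2 = of_real (1 - u) * b t + of_real u * b 0"
        have "gnorm (q1 - ca) \<le> (1 - u) * gnorm (a t - ca) + u * gnorm (b 0 + (a t - b t) - ca)"
          unfolding q1_def by (rule gnorm_conv[OF u])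
        also have "\<dots> \<le> (1 - u) * K + u * K"
          using u aK[OF t] dK[OF t] by (intro add_mono mult_left_mono) auto
        finally have q1: "gnorm (q1 - ca) \<le> K" by (simp add: algebra_simps)
        have "gnorm (q2 - ca) \<le> (1 - u) * gnorm (b t - ca) + u * gnorm (b 0 - ca)"
          unfolding q2_def by (rule gnorm_conv[OF u])
        also have "\<dots> \<le> (1 - u) * K + u * K"
          using u bK[OF t] bK[of 0] by (intro add_mono mult_left_mono) auto
        finally have q2: "gnorm (q2 - ca) \<le> K" by (simp add: algebra_simps)
        have "q1 - q2 = a t - b t" unfolding q1_def q2_def by (simp add: algebra_simps)
        then have "q1 \<noteq> q2" using ab[OF t] by auto
        then show "p \<in> Conf2_punct" using p inK[OF q1] inK[OF q2]
          by (simp add: Conf2_punct_def q1_def q2_def)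
      qed
    qed (use pab in auto)
    have h2: "homotopic_loops Conf2_punct ((\<lambda>z. (b 0 + z, b 0)) \<circ> (\<lambda>t. a t - b t))
                 ((\<lambda>z. (b 0 + z, b 0)) \<circ> (\<lambda>_. a 0 - b 0))"
    proof (rule homotopic_loops_continuous_image[OF Hd])
      show "continuous_on (path_image (\<lambda>t. a t - b t)) (\<lambda>z. (b 0 + z, b 0))" by (intro continuous_intros)
      show "(\<lambda>z. (b 0 + z, b 0)) \<in> path_image (\<lambda>t. a t - b t) \<rightarrow> Conf2_punct"
      proof
        fix z assume "z \<in> path_image (\<lambda>t. a t - b t)"
        then obtain t where t: "t \<in> {0..1}" "z = a t - b t" by (auto simp: path_image_def)
        have "b 0 \<noteq> 0" using b0 by auto
        moreover have "b 0 + z \<noteq> 0" using inK[OF dK[OF t(1)]] t by simp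
        moreover have "z \<noteq> 0" using ab[OF t(1)] t by simp
        ultimately show "(b 0 + z, b 0) \<in> Conf2_punct" by (simp add: Conf2_punct_def)
      qed
    qed
    have h2': "homotopic_loops Conf2_punct (\<lambda>t. (b 0 + (a t - b t), b 0)) (\<lambda>_. (a 0, b 0))"
      using h2 by (simp add: o_def)
    from homotopic_loops_trans[OF h1 h2'] show ?thesis .
  qed
qed


lemma W_boundRe: "\<bar>Re (W vs x)\<bar> + \<bar>Re (sum_list vs - W vs x)\<bar> \<le> sum_list (map (\<lambda>v. \<bar>Re v\<bar>) vs)"
proof (induction vs arbitrary: x)
  case Nil then show ?case by simp
next
  case (Cons v vs)
  have c: "0 \<le> clamp x" "clamp x \<le> 1" by (auto simp: clamp_def)
  have e1: "Re (W (v # vs) x) = clamp x * Re v + Re (W vs (x - 1))" by simp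
  have e2: "Re (sum_list (v # vs) - W (v # vs) x) = (1 - clamp x) * Re v + Re (sum_list vs - W vs (x - 1))"
    by (simp add: algebra_simps)
  have "\<bar>clamp x * Re v\<bar> + \<bar>(1 - clamp x) * Re v\<bar> = clamp x * \<bar>Re v\<bar> + (1 - clamp x) * \<bar>Re v\<bar>"
    using c by (simp only: abs_mult)
  also have "\<dots> = \<bar>Re v\<bar>" by (simp add: algebra_simps)
  finally have "\<bar>clamp x * Re v\<bar> + \<bar>(1 - clamp x) * Re v\<bar> = \<bar>Re v\<bar>" .
  moreover have "\<bar>clamp x * Re v + Re (W vs (x - 1))\<bar> \<le> \<bar>clamp x * Re v\<bar> + \<bar>Re (W vs (x - 1))\<bar>"
    by (rule abs_triangle_ineq)
  moreover have "\<bar>(1 - clamp x) * Re v + Re (sum_list vs - W vs (x - 1))\<bar> \<le> \<bar>(1 - clamp x) * Re v\<bar> + \<bar>Re (sum_list vs - W vs (x - 1))\<bar>"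
    by (rule abs_triangle_ineq)
  moreover have "sum_list (map (\<lambda>v. \<bar>Re v\<bar>) (v # vs)) = \<bar>Re v\<bar> + sum_list (map (\<lambda>v. \<bar>Re v\<bar>) vs)"
    by simp
  ultimately show ?case using Cons.IH[of "x - 1"] unfolding e1 e2 by linarith
qed

lemma W_boundIm: "\<bar>Im (W vs x)\<bar> + \<bar>Im (sum_list vs - W vs x)\<bar> \<le> sum_list (map (\<lambda>v. \<bar>Im v\<bar>) vs)"
proof (induction vs arbitrary: x)
  case Nil then show ?case by simp
next
  case (Cons v vs)
  have c: "0 \<le> clamp x" "clamp x \<le> 1" by (auto simp: clamp_def)
  have e1: "Im (W (v # vs) x) = clamp x * Im v + Im (W vs (x - 1))" by simp
  have e2: "Im (sum_list (v # vs) - W (v # vs) x) = (1 - clamp x) * Im v + Im (sum_list vs - W vs (x - 1))"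
    by (simp add: algebra_simps)
  have "\<bar>clamp x * Im v\<bar> + \<bar>(1 - clamp x) * Im v\<bar> = clamp x * \<bar>Im v\<bar> + (1 - clamp x) * \<bar>Im v\<bar>"
    using c by (simp only: abs_mult)
  also have "\<dots> = \<bar>Im v\<bar>" by (simp add: algebra_simps)
  finally have "\<bar>clamp x * Im v\<bar> + \<bar>(1 - clamp x) * Im v\<bar> = \<bar>Im v\<bar>" .
  moreover have "\<bar>clamp x * Im v + Im (W vs (x - 1))\<bar> \<le> \<bar>clamp x * Im v\<bar> + \<bar>Im (W vs (x - 1))\<bar>"
    by (rule abs_triangle_ineq)
  moreover have "\<bar>(1 - clamp x) * Im v + Im (sum_list vs - W vs (x - 1))\<bar> \<le> \<bar>(1 - clamp x) * Im v\<bar> + \<bar>Im (sum_list vs - W vs (x - 1))\<bar>"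
    by (rule abs_triangle_ineq)
  moreover have "sum_list (map (\<lambda>v. \<bar>Im v\<bar>) (v # vs)) = \<bar>Im v\<bar> + sum_list (map (\<lambda>v. \<bar>Im v\<bar>) vs)"
    by simp
  ultimately show ?case using Cons.IH[of "x - 1"] unfolding e1 e2 by linarith
qed

lemma sum_list_mono_map: "(\<And>v. f v \<le> g v) \<Longrightarrow> sum_list (map f vs) \<le> sum_list (map g vs)"
  for f g :: "'a \<Rightarrow> real"
  by (induction vs) (auto intro: add_mono)

lemma gnorm_W:
  assumes "sum_list vs = 0"
  shows "gnorm (W vs x) \<le> sum_list (map gnorm vs) / 2"
proof -
  have "sum_list (map (\<lambda>v. \<bar>Re v\<bar>) vs) \<le> sum_list (map gnorm vs)"
       "sum_list (map (\<lambda>v. \<bar>Im v\<bar>) vs) \<le> sum_list (map gnorm vs)"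
    by (rule sum_list_mono_map; simp add: gnorm_def)+
  then show ?thesis using W_boundRe[of vs x] W_boundIm[of vs x] assms
    by (simp add: gnorm_def)
qed

definition G :: "complex set" where "G = {0, 1, -1, \<i>, -\<i>}"

lemma G_gauss: "v \<in> G \<Longrightarrow> gaussian_int v"
  by (auto simp: G_def gaussian_int_def)

lemma gauss_add: "gaussian_int a \<Longrightarrow> gaussian_int b \<Longrightarrow> gaussian_int (a + b)"
  by (auto simp: gaussian_int_def)

lemma W_grid:
  assumes "set vs \<subseteq> G"
  shows "\<exists>g \<theta> v. gaussian_int g \<and> 0 \<le> \<theta> \<and> \<theta> \<le> 1 \<and> v \<in> G \<and> W vs x = g + of_real \<theta> * v"
  using assms
proof (induction vs arbitrary: x)
  case Nil then show ?case
    by (rule_tac x=0 in exI, rule_tac x=0 in exI, rule_tac x=0 in exI) (simp add: G_def gaussian_int_def)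
next
  case (Cons v vs)
  show ?case
  proof (cases "x \<le> 1")
    case True
    then have "W (v # vs) x = 0 + of_real (clamp x) * v" by (simp add: W_le0)
    then show ?thesis using Cons.prems
      by (rule_tac x=0 in exI, rule_tac x="clamp x" in exI, rule_tac x=v in exI)
         (simp add: clamp_simps gaussian_int_def)
  next
    case False
    then have cl: "clamp x = 1" by (simp add: clamp_simps)
    have "\<exists>g \<theta> u. gaussian_int g \<and> 0 \<le> \<theta> \<and> \<theta> \<le> 1 \<and> u \<in> G \<and> W vs (x - 1) = g + of_real \<theta> * u"
      using Cons.IH[of "x - 1"] Cons.prems by simp
    then obtain g \<theta> u where gu: "gaussian_int g" "0 \<le> \<theta>" "\<theta> \<le> 1" "u \<in> G" "W vs (x - 1) = g + of_real \<theta> * u"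
      by blast
    have "W (v # vs) x = (v + g) + of_real \<theta> * u" using cl gu by simp
    moreover have "gaussian_int (v + g)" using Cons.prems gu by (auto intro: gauss_add G_gauss)
    ultimately show ?thesis using gu by blast
  qed
qed

lemma grid_nz:
  assumes "Re z \<notin> \<int>" "Im z \<notin> \<int>" "gaussian_int g" "v \<in> G"
  shows "z + g + of_real \<theta> * v \<noteq> 0"
proof
  assume h: "z + g + of_real \<theta> * v = 0"
  have "Im z = - Im g \<or> Re z = - Re g"
  proof -
    consider "v = 0 \<or> v = 1 \<or> v = -1" | "v = \<i> \<or> v = -\<i>" using assms(4) by (auto simp: G_def)
    then show ?thesis
    proof cases
      case 1
      then have "Im (z + g + of_real \<theta> * v) = Im z + Im g" by auto
      then show ?thesis using h by simp
    next
      case 2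
      then have "Re (z + g + of_real \<theta> * v) = Re z + Re g" by auto
      then show ?thesis using h by simp
    qed
  qed
  then show False using assms(1-3) by (auto simp: gaussian_int_def)
qed

lemma walk_nz:
  assumes "Re z \<notin> \<int>" "Im z \<notin> \<int>" "set vs \<subseteq> G"
  shows "walk z vs t \<noteq> 0"
proof -
  obtain g \<theta> v where "gaussian_int g" "v \<in> G" "W vs (t * real (length vs)) = g + of_real \<theta> * v"
    using W_grid[OF assms(3)] by blast
  then show ?thesis using grid_nz[OF assms(1,2)] unfolding walk_def by (simp add: add.assoc)
qed


lemma W_stair: "k < length vs \<Longrightarrow> real k \<le> x \<Longrightarrow> x \<le> real k + 1 \<Longrightarrow>
   W vs x = sum_list (take k vs) + of_real (x - real k) * vs ! k"
proof (induction vs arbitrary: x k)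
  case Nil then show ?case by simp
next
  case (Cons v vs)
  show ?case
  proof (cases k)
    case 0
    then show ?thesis using Cons.prems by (simp add: W_le0 clamp_simps)
  next
    case (Suc m)
    then have "W vs (x - 1) = sum_list (take m vs) + of_real (x - 1 - real m) * vs ! m"
      using Cons.prems by (intro Cons.IH) auto
    moreover have "clamp x = 1" using Cons.prems Suc by (simp add: clamp_simps)
    ultimately show ?thesis using Suc by (simp add: algebra_simps)
  qed
qed

lemma pl_eq:
  assumes t: "t \<in> {0..1}"
  shows "pl_path st z w t = walk z (map st w) t"
proof (cases "w = []")
  case True then show ?thesis by (simp add: pl_path_def vertex_def walk_def)
next
  case False
  define n where "n = length w"
  define s where "s = t * real n"
  define k where "k = min (nat \<lfloor>s\<rfloor>) (n - 1)"
  have npos: "n > 0" using False by (simp add: n_def)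
  have s: "0 \<le> s" "s \<le> real n" using t by (auto simp: s_def intro: mult_left_le_one_le)
  have kn: "k < n" using npos by (simp add: k_def)
  have ks: "real k \<le> s" "s \<le> real k + 1"
  proof -
    show "real k \<le> s" using s by (auto simp: k_def min_def) linarith+
  next
    show "s \<le> real k + 1"
    proof (cases "nat \<lfloor>s\<rfloor> \<le> n - 1")
      case True then have "k = nat \<lfloor>s\<rfloor>" by (simp add: k_def)
      then show ?thesis using s by linarith
    next
      case False then have "k = n - 1" by (simp add: k_def)
      then show ?thesis using s npos by (simp add: of_nat_diff)
    qed
  qed
  have "pl_path st z w t = vertex st z w k + of_real (s - real k) * (vertex st z w (Suc k) - vertex st z w k)"
    by (simp add: pl_path_def Let_def n_def s_def k_def)
  also have "\<dots> = z + sum_list (take k (map st w)) + of_real (s - real k) * (map st w ! k)"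
    using kn by (simp add: vertex_def take_Suc_conv_app_nth n_def take_map)
  also have "\<dots> = walk z (map st w) t"
    using W_stair[of k "map st w" s] kn ks by (simp add: walk_def s_def n_def)
  finally show ?thesis .
qed

lemma Rstep_cons: "Rstep u v \<Longrightarrow> Rstep (x # u) (x # v)"
  unfolding Rstep_def by (metis append_Cons)

lemma Rstar_cons: "Rstep\<^sup>*\<^sup>* u v \<Longrightarrow> Rstep\<^sup>*\<^sup>* (x # u) (x # v)"
  by (induction rule: rtranclp_induct) (auto intro: rtranclp.rtrancl_into_rtrancl Rstep_cons)

lemma Rstar_zeros: "Rstep\<^sup>*\<^sup>* vs (filter (\<lambda>v. v \<noteq> 0) vs)"
proof (induction vs)
  case Nil then show ?case by simp
next
  case (Cons v vs)
  show ?case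
  proof (cases "v = 0")
    case True
    have "Rstep (0 # vs) vs" unfolding Rstep_def by (metis append.left_neutral append_Cons)
    then show ?thesis using True Cons by (auto intro: converse_rtranclp_into_rtranclp)
  next
    case False then show ?thesis using Rstar_cons[OF Cons] by simp
  qed
qed

lemma lift_cancel:
  assumes f: "\<And>g e. f (g, \<not> e) = - f (g, e)" and ft: "free_trivial u"
  shows "Rstep\<^sup>*\<^sup>* (map f u) []"
proof -
  have step: "Rstep\<^sup>*\<^sup>* (map f u) (map f v)" if cu: "cancel1 u v" for u v
  proof -
    obtain a b g e where uv: "u = a @ [(g, e), (g, \<not> e)] @ b" "v = a @ b"
      using cu unfolding cancel1_def by blast
    define A B c where "A = map f a" and "B = map f b" and "c = f (g, e)"
    have "map f u = A @ [c, -c] @ B" using uv f by (simp add: A_def B_def c_def)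
    then have 1: "Rstep (map f u) (A @ [0,0] @ B)" unfolding Rstep_def by blast
    have 2: "Rstep (A @ [0,0] @ B) (A @ [0] @ B)" unfolding Rstep_def
      by (rule disjI1, rule exI[of _ A], rule exI[of _ "0 # B"]) simp
    have 3: "Rstep (A @ [0] @ B) (A @ B)" unfolding Rstep_def by blast
    have "map f v = A @ B" using uv by (simp add: A_def B_def)
    then show ?thesis using 1 2 3 by (metis converse_rtranclp_into_rtranclp rtranclp.rtrancl_refl)
  qed
  have "cancel1\<^sup>*\<^sup>* u []" using ft by (simp add: free_trivial_def)
  then have "Rstep\<^sup>*\<^sup>* (map f u) (map f [])"
    by (induction rule: rtranclp_induct) (auto intro: rtranclp_trans step)
  then show ?thesis by simp
qed


lemma sgn_b_not: "sgn_b (\<not> e) = - sgn_b e" by (simp add: sgn_b_def)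
lemma sgn_b_nz: "sgn_b e \<noteq> 0" by (simp add: sgn_b_def)

definition fa :: "nat \<times> bool \<Rightarrow> complex" where
  "fa p = (if fst p = 1 then sgn_b (snd p) else \<i> * sgn_b (snd p))"
definition fb :: "nat \<times> bool \<Rightarrow> complex" where
  "fb p = (if fst p = 1 then - sgn_b (snd p) else - \<i> * sgn_b (snd p))"

lemma fa_neg: "fa (g, \<not> e) = - fa (g, e)" by (simp add: fa_def sgn_b_not)
lemma fb_neg: "fb (g, \<not> e) = - fb (g, e)" by (simp add: fb_def sgn_b_not)
lemma fbm_neg: "(\<lambda>p. - fb p) (g, \<not> e) = - (\<lambda>p. - fb p) (g, e)" by (simp add: fb_def sgn_b_not)

lemma filt_x: "filter (\<lambda>v. v \<noteq> 0) (map step_x w) = map fa (proj_a w)"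
proof (induction w)
  case Nil then show ?case by (simp add: proj_a_def)
next
  case (Cons l w)
  obtain g e where l: "l = (g, e)" by (cases l)
  show ?case using Cons by (cases g) (auto simp: l proj_a_def fa_def sgn_b_nz)
qed

lemma filt_y: "filter (\<lambda>v. v \<noteq> 0) (map step_y w) = map fb (proj_b w)"
proof (induction w)
  case Nil then show ?case by (simp add: proj_b_def)
next
  case (Cons l w)
  obtain g e where l: "l = (g, e)" by (cases l)
  show ?case using Cons by (cases g) (auto simp: l proj_b_def fb_def sgn_b_nz)
qed

lemma map_diff_c: "map (\<lambda>l. step_x l - step_y l) w = map fb (proj_c w)"
proof (induction w)
  case Nil then show ?case by (simp add: proj_c_def)
next
  case (Cons l w)
  obtain g e where l: "l = (g, e)" by (cases l)
  show ?case using Cons by (cases g) (auto simp: l proj_c_def fb_def sgn_b_not)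
qed

lemma map_diff_c': "map (\<lambda>l. step_y l - step_x l) w = map (\<lambda>p. - fb p) (proj_c w)"
proof (induction w)
  case Nil then show ?case by (simp add: proj_c_def)
next
  case (Cons l w)
  obtain g e where l: "l = (g, e)" by (cases l)
  show ?case using Cons by (cases g) (auto simp: l proj_c_def fb_def sgn_b_not)
qed

lemma W_diff: "W (map f w) x - W (map g w) x = W (map (\<lambda>l. f l - g l) w) x"
  by (induction w arbitrary: x) (simp_all add: algebra_simps)

lemma walk_diff: "walk z1 (map f w) t - walk z2 (map g w) t = walk (z1 - z2) (map (\<lambda>l. f l - g l) w) t"
  unfolding walk_def using W_diff[of f w _ g] by (simp add: algebra_simps)

lemma steps_G: "step_x l \<in> G \<and> step_y l \<in> G \<and> step_x l - step_y l \<in> G \<and> step_y l - step_x l \<in> G"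
proof (cases l)
  case (Pair g e) then show ?thesis by (cases g; cases e; simp add: G_def sgn_b_def)
qed

lemma gnorm_steps: "gnorm (step_x l) + gnorm (step_y l) = 1"
proof (cases l)
  case (Pair g e) then show ?thesis by (cases g; cases e; simp add: gnorm_def sgn_b_def)
qed

lemma gnorm_sum_len: "sum_list (map gnorm (map step_x w)) + sum_list (map gnorm (map step_y w)) = real (length w)"
proof (induction w)
  case Nil then show ?case by simp
next
  case (Cons l w) then show ?case using gnorm_steps[of l] by simp
qed

lemma sum_nonneg_g: "0 \<le> sum_list (map gnorm vs)"
  by (induction vs) (auto simp: gnorm_nonneg)

lemma third_not_int:
  fixes r q :: real
  assumes "r \<in> \<int>" "q \<in> {1/3, -1/3, 2/3, -2/3}" shows "r + q \<notin> \<int>"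
proof
  assume "r + q \<in> \<int>"
  then have "q \<in> \<int>" using assms(1) Ints_diff[of "r + q" r] by simp
  then obtain m where m: "q = real_of_int m" by (auto elim: Ints_cases)
  have "(0 < q \<and> q < 1) \<or> (-1 < q \<and> q < 0)" using assms(2) by auto
  moreover have "m \<ge> 1 \<Longrightarrow> q \<ge> 1" "m \<le> -1 \<Longrightarrow> q \<le> -1" "m = 0 \<Longrightarrow> q = 0"
    unfolding m by simp_all
  moreover have "m \<ge> 1 \<or> m \<le> -1 \<or> m = 0" by linarith
  ultimately show False by linarith
qed


lemma gnorm_int: "gaussian_int p \<Longrightarrow> gnorm p \<in> \<int>"
  by (auto simp: gnorm_def gaussian_int_def max_def)

lemma int_gt: "x \<in> \<int> \<Longrightarrow> x > real n \<Longrightarrow> x \<ge> real n + 1"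
proof -
  assume "x \<in> \<int>" "x > real n"
  then obtain m where m: "x = real_of_int m" by (auto elim: Ints_cases)
  then have "m > int n" using \<open>x > real n\<close> by simp
  then have "m \<ge> int n + 1" by simp
  then have "real_of_int m \<ge> real_of_int (int n + 1)" by (simp only: of_int_le_iff)
  then show ?thesis using m by simp
qed

lemma linepath_const: "linepath c c = (\<lambda>_. c)"
  by (simp add: linepath_def fun_eq_iff scaleR_diff_left[symmetric] algebra_simps)

theorem lemma4p10:
  fixes w :: "letter list" and px py :: complex
  assumes "in_T w"
    and "gaussian_int px" and "gaussian_int py"
    and "max (gnorm px) (gnorm py) > real (length w)"
  shows "I_trivial px py w"
proof -
  define a where "a = walk (hat_x px) (map step_x w)"
  define b where "b = walk (hat_y py) (map step_y w)"
  define Nx where "Nx = sum_list (map gnorm (map step_x w))"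
  define Ny where "Ny = sum_list (map gnorm (map step_y w))"
  have fta: "free_trivial (proj_a w)" and ftb: "free_trivial (proj_b w)" and ftc: "free_trivial (proj_c w)"
    using assms(1) by (auto simp: in_T_def)
  have Rx: "Rstep\<^sup>*\<^sup>* (map step_x w) []"
    using rtranclp_trans[OF Rstar_zeros[of "map step_x w"], unfolded filt_x, OF lift_cancel[OF fa_neg fta]] .
  have Ry: "Rstep\<^sup>*\<^sup>* (map step_y w) []"
    using rtranclp_trans[OF Rstar_zeros[of "map step_y w"], unfolded filt_y, OF lift_cancel[OF fb_neg ftb]] .
  have Rd: "Rstep\<^sup>*\<^sup>* (map (\<lambda>l. step_x l - step_y l) w) []"
    unfolding map_diff_c by (rule lift_cancel[OF fb_neg ftc])
  have Rd': "Rstep\<^sup>*\<^sup>* (map (\<lambda>l. step_y l - step_x l) w) []"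
    unfolding map_diff_c' by (rule lift_cancel[of "\<lambda>p. - fb p", OF fbm_neg ftc])
  have sx: "sum_list (map step_x w) = 0" using Rstar_sum[OF Rx] by simp
  have sy: "sum_list (map step_y w) = 0" using Rstar_sum[OF Ry] by simp
  have pa: "path a" "a 1 = a 0" "a 0 = hat_x px" using sx by (auto simp: a_def path_walk walk_0 walk_1)
  have pb: "path b" "b 1 = b 0" "b 0 = hat_y py" using sy by (auto simp: b_def path_walk walk_0 walk_1)
  have ba: "gnorm (a t - hat_x px) \<le> Nx / 2" for t
    using gnorm_W[OF sx] by (simp add: a_def walk_def Nx_def)
  have bb: "gnorm (b t - hat_y py) \<le> Ny / 2" for t
    using gnorm_W[OF sy] by (simp add: b_def walk_def Ny_def)
  have NN: "Nx + Ny = real (length w)" "Nx \<ge> 0" "Ny \<ge> 0"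
    using gnorm_sum_len[of w] sum_nonneg_g[of "map step_x w"] sum_nonneg_g[of "map step_y w"]
    unfolding Nx_def Ny_def by auto
  have Gx: "set (map step_x w) \<subseteq> G" and Gy: "set (map step_y w) \<subseteq> G"
    and Gd: "set (map (\<lambda>l. step_x l - step_y l) w) \<subseteq> G" and Gd': "set (map (\<lambda>l. step_y l - step_x l) w) \<subseteq> G"
    using steps_G by auto
  have ReIm: "Re px \<in> \<int>" "Im px \<in> \<int>" "Re py \<in> \<int>" "Im py \<in> \<int>"
    using assms(2,3) by (auto simp: gaussian_int_def)
  have ni: "Re (hat_x px) \<notin> \<int>" "Im (hat_x px) \<notin> \<int>" "Re (hat_y py) \<notin> \<int>" "Im (hat_y py) \<notin> \<int>"
    "Re (hat_x px - hat_y py) \<notin> \<int>" "Im (hat_x px - hat_y py) \<notin> \<int>"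
    "Re (hat_y py - hat_x px) \<notin> \<int>" "Im (hat_y py - hat_x px) \<notin> \<int>"
  proof -
    have e: "Re (hat_x px) = Re px + (-1/3)" "Im (hat_x px) = Im px + (-1/3)"
      "Re (hat_y py) = Re py + 1/3" "Im (hat_y py) = Im py + 1/3"
      "Re (hat_x px - hat_y py) = (Re px - Re py) + (-2/3)" "Im (hat_x px - hat_y py) = (Im px - Im py) + (-2/3)"
      "Re (hat_y py - hat_x px) = (Re py - Re px) + 2/3" "Im (hat_y py - hat_x px) = (Im py - Im px) + 2/3"
      by (simp_all add: hat_x_def hat_y_def)
    show "Re (hat_x px) \<notin> \<int>" "Im (hat_x px) \<notin> \<int>" "Re (hat_y py) \<notin> \<int>" "Im (hat_y py) \<notin> \<int>"
      "Re (hat_x px - hat_y py) \<notin> \<int>" "Im (hat_x px - hat_y py) \<notin> \<int>"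
      "Re (hat_y py - hat_x px) \<notin> \<int>" "Im (hat_y py - hat_x px) \<notin> \<int>"
      unfolding e by (rule third_not_int; use ReIm in auto)+
  qed
  have anz: "a t \<noteq> 0" for t using walk_nz[OF ni(1,2) Gx] by (simp add: a_def)
  have bnz: "b t \<noteq> 0" for t using walk_nz[OF ni(3,4) Gy] by (simp add: b_def)
  have deq: "(\<lambda>t. a t - b t) = walk (hat_x px - hat_y py) (map (\<lambda>l. step_x l - step_y l) w)"
    by (simp add: a_def b_def walk_diff fun_eq_iff)
  have deq': "(\<lambda>t. b t - a t) = walk (hat_y py - hat_x px) (map (\<lambda>l. step_y l - step_x l) w)"
    by (simp add: a_def b_def walk_diff fun_eq_iff)
  have abnz: "a t \<noteq> b t" for t
    using walk_nz[OF ni(5,6) Gd, of t] deq by (metis right_minus_eq)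
  have Ha: "homotopic_loops (path_image a) a (\<lambda>_. a 0)"
    using tool[OF Rx, of "hat_x px"] pa by (simp add: a_def)
  have Hb: "homotopic_loops (path_image b) b (\<lambda>_. b 0)"
    using tool[OF Ry, of "hat_y py"] pb by (simp add: b_def)
  have Hd: "homotopic_loops (path_image (\<lambda>t. a t - b t)) (\<lambda>t. a t - b t) (\<lambda>_. a 0 - b 0)"
    using tool[OF Rd, of "hat_x px - hat_y py"] pa pb by (simp add: deq)
  have Hd': "homotopic_loops (path_image (\<lambda>t. b t - a t)) (\<lambda>t. b t - a t) (\<lambda>_. b 0 - a 0)"
    using tool[OF Rd', of "hat_y py - hat_x px"] pa pb by (simp add: deq')
  have c3: "gnorm (1/3 + \<i>/3) = 1/3" by (simp add: gnorm_def)
  have main: "homotopic_loops Conf2_punct (\<lambda>t. (a t, b t)) (\<lambda>_. (a 0, b 0))"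
  proof (cases "gnorm px > real (length w)")
    case True
    then have g1: "gnorm px \<ge> real (length w) + 1" using int_gt[OF gnorm_int[OF assms(2)]] by blast
    have "gnorm px \<le> gnorm (hat_x px) + 1/3"
      using gnorm_tri[of "hat_x px" "1/3 + \<i>/3"] c3 by (simp add: hat_x_def)
    then have far: "gnorm (hat_x px) > Nx / 2 + 2 * (Ny / 2)" using g1 NN by linarith
    show ?thesis
      by (rule abs_main[OF pa(1) pb(1) pa(2) pb(2) ba bb far _ bnz abnz Hb Hd]) (simp add: NN)
  next
    case False
    then have "gnorm py > real (length w)" using assms(4) by linarith
    then have g1: "gnorm py \<ge> real (length w) + 1" using int_gt[OF gnorm_int[OF assms(3)]] by blast
    have "gnorm py \<le> gnorm (hat_y py) + 1/3"
      using gnorm_diff_tri[of "hat_y py" "1/3 + \<i>/3"] c3 by (simp add: hat_y_def)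
    then have far: "gnorm (hat_y py) > Ny / 2 + 2 * (Nx / 2)" using g1 NN by linarith
    have banz: "b t \<noteq> a t" for t using abnz[of t] by metis
    have sw: "homotopic_loops Conf2_punct (\<lambda>t. (b t, a t)) (\<lambda>_. (b 0, a 0))"
      by (rule abs_main[OF pb(1) pa(1) pb(2) pa(2) bb ba far _ anz banz Ha Hd']) (simp add: NN)
    have "homotopic_loops Conf2_punct ((\<lambda>p. (snd p, fst p)) \<circ> (\<lambda>t. (b t, a t))) ((\<lambda>p. (snd p, fst p)) \<circ> (\<lambda>_. (b 0, a 0)))"
      by (rule homotopic_loops_continuous_image[OF sw]) (auto intro!: continuous_intros simp: Conf2_punct_def)
    then show ?thesis by (simp add: o_def)
  qed
  have geq: "\<And>t. t \<in> {0..1} \<Longrightarrow> (\<lambda>t. (a t, b t)) t = gamma px py w t"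
    by (simp add: gamma_def pl_eq a_def b_def)
  have m1: "path (\<lambda>t. (a t, b t))" "path_image (\<lambda>t. (a t, b t)) \<subseteq> Conf2_punct"
    "pathfinish (\<lambda>t. (a t, b t)) = pathstart (\<lambda>t. (a t, b t))"
    using homotopic_loops_imp_path[OF main] homotopic_loops_imp_subset[OF main]
      homotopic_loops_imp_loop[OF main] by auto
  have "homotopic_loops Conf2_punct (\<lambda>t. (a t, b t)) (gamma px py w)"
    by (rule homotopic_loops_eq[OF m1]) (rule geq)
  then have "homotopic_loops Conf2_punct (gamma px py w) (\<lambda>_. (a 0, b 0))"
    using main homotopic_loops_sym homotopic_loops_trans by blast
  then show ?thesis unfolding I_trivial_def linepath_const using pa pb by simp
qed

end
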